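(* Let $T(t)$ and $S(t)$ be strongly continuous semigroups on Banach spaces $X$ and $Y$, respectively, and assume that $T(t)$ satisfies the recurrent hypercyclicity criterion. Let $\alpha$ be a uniform crossnorm on the algebraic tensor product $X\otimes Y$, and let $X\tilde{\otimes}_\alpha Y$ denote the completion of $(X\otimes Y,\alpha)$. (a) If $S(t)$ satisfies the hypercyclicity criterion, then the semigroup $T(t)\otimes S(t)$ on $X\tilde{\otimes}_\alpha Y$ satisfies the hypercyclicity criterion. (b) If $S(t)$ satisfies the recurrent hypercyclicity criterion, then the semigroup $T(t)\otimes S(t)$ on $X\tilde{\otimes}_\alpha Y$ satisfies the recurrent hypercyclicity criterion.
   Context: A uniform crossnorm on $X\otimes Y$ is a reasonable crossnorm $\alpha$ (in particular $\alpha(x\otimes y)=\|x\|_X\|y\|_Y$ for $x\in X,y\in Y$) such that for all bounded operators $A$ on $X$ and $B$ on $Y$ the operator $A\otimes B$ is bounded on $(X\otimes Y,\alpha)$ with norm at most $\|A\|\|B\|$. The operator $T(t)\otimes S(t)$ is defined on elementary tensors by $x\otimes y\mapsto T(t)x\otimes S(t)y$ and extended uniquely by continuity to $X\tilde{\otimes}_\alpha Y$; this gives a strongly continuous semigroup. A strongly continuous semigroup $R(t)$ on a (separable) Banach space $Z$ satisfies the hypercyclicity criterion if for all non-empty open subsets $U,V,W\subset Z$ with $0\in W$ there exists $t>0$ with $R(t)U\cap W\neq\emptyset$ and $R(t)W\cap V\neq\emptyset$. It satisfies the recurrent hypercyclicity criterion if for all non-empty open subsets $U,V,W\subset Z$ with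 $0\in W$ there exists a constant $L\geq 0$ such that every interval $[t,t+L]$ ($t\ge 0$) contains some $s$ with $R(s)U\cap W\neq\emptyset$ and $R(s)W\cap V\neq\emptyset$. *)

theory Defs
  imports "HOL-Analysis.Analysis"
begin

definition strongly_continuous_semigroup :: "(real \<Rightarrow> 'a::banach \<Rightarrow> 'a) \<Rightarrow> bool" where
  "strongly_continuous_semigroup T \<longleftrightarrow>
     (\<forall>t\<ge>0. bounded_linear (T t)) \<and>
     T 0 = id \<and>
     (\<forall>s\<ge>0. \<forall>t\<ge>0. T (s + t) = T s \<circ> T t) \<and>
     (\<forall>x. continuous_on {0..} (\<lambda>t. T t x))"

definition hypercyclicity_criterion :: "(real \<Rightarrow> 'a::banach \<Rightarrow> 'a) \<Rightarrow> bool" where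
  "hypercyclicity_criterion R \<longleftrightarrow>
     (\<forall>U V W. open U \<and> U \<noteq> {} \<and> open V \<and> V \<noteq> {} \<and> open W \<and> 0 \<in> W \<longrightarrow>
        (\<exists>t>0. R t ` U \<inter> W \<noteq> {} \<and> R t ` W \<inter> V \<noteq> {}))"

definition recurrent_hypercyclicity_criterion :: "(real \<Rightarrow> 'a::banach \<Rightarrow> 'a) \<Rightarrow> bool" where
  "recurrent_hypercyclicity_criterion R \<longleftrightarrow>
     (\<forall>U V W. open U \<and> U \<noteq> {} \<and> open V \<and> V \<noteq> {} \<and> open W \<and> 0 \<in> W \<longrightarrow>
        (\<exists>L\<ge>0. \<forall>t\<ge>0. \<exists>s\<in>{t..t+L}. R s ` U \<inter> W \<noteq> {} \<and> R s ` W \<inter> V \<noteq> {}))"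

text \<open>\<open>tensor_completion tp\<close>: the Banach space 'c, together with the bilinear map tp,
  is (isometrically) the completion of the algebraic tensor product of 'a and 'b
  with respect to a uniform (reasonable) crossnorm.  Precisely:
  tp is bilinear; the canonical linear map from the algebraic tensor product is injective
  (no nontrivial relation \<open>\<Sum> tp x_i y_i = 0\<close> beyond those of the algebraic tensor product,
  tested by products f \<otimes> g of linear functionals, which separate the algebraic tensor product);
  the span of elementary tensors is dense; the norm is a crossnorm; its dual norm is
  a crossnorm on bounded functionals (reasonable); and it is uniform.\<close>
definition tensor_completion :: "('a::banach \<Rightarrow> 'b::banach \<Rightarrow> 'c::banach) \<Rightarrow> bool" where
  "tensor_completion tp \<longleftrightarrow>
     (\<forall>x. linear (tp x)) \<and> (\<forall>y. linear (\<lambda>x. tp x y)) \<and>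
     (\<forall>n (x::nat \<Rightarrow> 'a) (y::nat \<Rightarrow> 'b) (f::'a \<Rightarrow> real) (g::'b \<Rightarrow> real).
        linear f \<and> linear g \<and> (\<Sum>i<n. tp (x i) (y i)) = 0 \<longrightarrow> (\<Sum>i<n. f (x i) * g (y i)) = 0) \<and>
     closure (span (range (case_prod tp))) = UNIV \<and>
     (\<forall>x y. norm (tp x y) = norm x * norm y) \<and>
     (\<forall>n (x::nat \<Rightarrow> 'a) (y::nat \<Rightarrow> 'b) (f::'a \<Rightarrow> real) (g::'b \<Rightarrow> real).
        bounded_linear f \<and> bounded_linear g \<longrightarrow>
        \<bar>\<Sum>i<n. f (x i) * g (y i)\<bar> \<le> onorm f * onorm g * norm (\<Sum>i<n. tp (x i) (y i))) \<and>
     (\<forall>n (x::nat \<Rightarrow> 'a) (y::nat \<Rightarrow> 'b) (A::'a \<Rightarrow> 'a) (B::'b \<Rightarrow> 'b).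
        bounded_linear A \<and> bounded_linear B \<longrightarrow>
        norm (\<Sum>i<n. tp (A (x i)) (B (y i))) \<le> onorm A * onorm B * norm (\<Sum>i<n. tp (x i) (y i)))"

end

theory Submission
  imports Defs
begin

lemma scs_bl: "strongly_continuous_semigroup P \<Longrightarrow> t \<ge> 0 \<Longrightarrow> bounded_linear (P t)"
  by (simp add: strongly_continuous_semigroup_def)

lemma scs_cont: "strongly_continuous_semigroup P \<Longrightarrow> continuous_on {0..} (\<lambda>t. P t x)"
  by (simp add: strongly_continuous_semigroup_def)

lemma scs_comp: "strongly_continuous_semigroup P \<Longrightarrow> s \<ge> 0 \<Longrightarrow> t \<ge> 0 \<Longrightarrow> P (s + t) x = P s (P t x)"
  by (simp add: strongly_continuous_semigroup_def)

lemma scs_commute: "strongly_continuous_semigroup P \<Longrightarrow> s \<ge> 0 \<Longrightarrow> t \<ge> 0 \<Longrightarrow> P s (P t x) = P t (P s x)"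
  by (metis scs_comp add.commute)

lemma UB:
  fixes P :: "real \<Rightarrow> 'a::banach \<Rightarrow> 'a"
  assumes sg: "strongly_continuous_semigroup P" and L: "L \<ge> 0"
  shows "\<exists>M>0. \<forall>r\<in>{0..L}. \<forall>x. norm (P r x) \<le> M * norm x"
proof -
  define E where "E n = (\<Inter>r\<in>{0..L}. {x. norm (P r x) \<le> real n})" for n :: nat
  have clo: "closed (E n)" for n
    unfolding E_def
  proof (intro closed_INT ballI)
    fix r assume "r \<in> {0..L}"
    then have "bounded_linear (P r)" using scs_bl[OF sg] by auto
    then have "continuous_on UNIV (P r)" by (simp add: linear_continuous_on)
    then have "continuous_on UNIV (\<lambda>x. norm (P r x))" by (intro continuous_on_norm)
    then show "closed {x. norm (P r x) \<le> real n}"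
      by (intro closed_Collect_le) auto
  qed
  have cover: "\<Union>(range E) = UNIV"
  proof -
    { fix x
      have "continuous_on {0..L} (\<lambda>t. P t x)"
        using scs_cont[OF sg] by (rule continuous_on_subset) auto
      then have "compact ((\<lambda>t. P t x) ` {0..L})"
        by (intro compact_continuous_image) auto
      then obtain c where c: "\<forall>y\<in>(\<lambda>t. P t x) ` {0..L}. norm y \<le> c"
        using compact_imp_bounded bounded_iff by blast
      have "x \<in> E (nat \<lceil>c\<rceil>)"
        unfolding E_def using c
        by (auto intro: order_trans[OF _ real_nat_ceiling_ge])
      then have "x \<in> \<Union>(range E)" by blast }
    then show ?thesis by blast
  qed
  have "\<exists>n. interior (E n) \<noteq> {}"
  proof (rule ccontr)
    assume "\<not> ?thesis"
    then have "euclidean interior_of \<Union>(range E) = {}"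
      by (intro Baire_category_alt) (auto simp: completely_metrizable_space_euclidean clo)
    then show False using cover by simp
  qed
  then obtain n where "interior (E n) \<noteq> {}" by blast
  then obtain x0 \<rho> where rho: "\<rho> > 0" "ball x0 \<rho> \<subseteq> E n"
    by (metis all_not_in_conv open_contains_ball open_interior interior_subset subset_trans)
  define M where "M = 4 * real n / \<rho> + 1"
  have Mpos: "M > 0" unfolding M_def using rho by (simp add: add_nonneg_pos)
  show ?thesis
  proof (intro exI[of _ M] conjI Mpos ballI allI)
    fix r x assume r: "r \<in> {0..L}"
    then have lin: "linear (P r)" using scs_bl[OF sg] bounded_linear.linear by auto
    show "norm (P r x) \<le> M * norm x"
    proof (cases "x = 0")
      case True then show ?thesis using lin by (simp add: linear_0)
    next
      case False
      define z where "z = (\<rho> / (2 * norm x)) *\<^sub>R x"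
      have nz: "norm z = \<rho> / 2" using False rho by (simp add: z_def)
      have "x0 + z \<in> ball x0 \<rho>" "x0 \<in> ball x0 \<rho>" using nz rho by (auto simp: dist_norm)
      then have b1: "norm (P r (x0 + z)) \<le> real n" and b2: "norm (P r x0) \<le> real n"
        using rho(2) r unfolding E_def by blast+
      have "P r z = P r (x0 + z) - P r x0" using lin by (simp add: linear_add)
      then have bz: "norm (P r z) \<le> 2 * real n" using b1 b2 norm_triangle_ineq4[of "P r (x0+z)" "P r x0"] by simp
      have "x = (2 * norm x / \<rho>) *\<^sub>R z" using False rho by (simp add: z_def)
      then have "P r x = (2 * norm x / \<rho>) *\<^sub>R P r z" using lin by (metis linear_scale)
      then have "norm (P r x) = (2 * norm x / \<rho>) * norm (P r z)" using rho by simp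
      also have "\<dots> \<le> (2 * norm x / \<rho>) * (2 * real n)"
        using bz rho by (intro mult_left_mono) auto
      also have "\<dots> = (4 * real n / \<rho>) * norm x" by (simp add: field_simps)
      also have "\<dots> \<le> M * norm x" unfolding M_def by (simp add: distrib_right)
      finally show ?thesis .
    qed
  qed
qed

definition good :: "(real \<Rightarrow> 'a::banach \<Rightarrow> 'a) \<Rightarrow> 'a set \<Rightarrow> 'a set \<Rightarrow> 'a set \<Rightarrow> real \<Rightarrow> bool" where
  "good P U V W s \<longleftrightarrow> P s ` U \<inter> W \<noteq> {} \<and> P s ` W \<inter> V \<noteq> {}"

definition MG :: "(real \<Rightarrow> 'a::banach \<Rightarrow> 'a) \<Rightarrow> real \<Rightarrow> 'a set set \<Rightarrow> 'a set set \<Rightarrow> real \<Rightarrow> bool" where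
  "MG P \<delta> A B s \<longleftrightarrow> (\<forall>G\<in>A. \<exists>x\<in>G. norm (P s x) < \<delta>) \<and> (\<forall>G\<in>B. \<exists>w. norm w < \<delta> \<and> P s w \<in> G)"

lemma bl_cont: "bounded_linear f \<Longrightarrow> continuous_on UNIV f"
  by (simp add: linear_continuous_on)

lemma open_pre: "bounded_linear f \<Longrightarrow> open G \<Longrightarrow> open (f -` G)"
  by (metis bl_cont open_vimage)

lemma Tr:
  fixes P :: "real \<Rightarrow> 'a::banach \<Rightarrow> 'a"
  assumes sg: "strongly_continuous_semigroup P" and hc: "hypercyclicity_criterion P"
    and U: "open U" "U \<noteq> {}" and V: "open V" "V \<noteq> {}"
  shows "\<exists>k\<ge>0. \<exists>x\<in>U. P k x \<in> V"
proof -
  obtain p0 where "p0 \<in> U" using U by blast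
  then obtain e1 where p: "e1 > 0" "ball p0 e1 \<subseteq> U" using U openE by metis
  obtain q0 where "q0 \<in> V" using V by blast
  then obtain e2 where q: "e2 > 0" "ball q0 e2 \<subseteq> V" using V openE by metis
  define e where "e = min e1 e2 / 2"
  have e: "e > 0" using p q by (simp add: e_def)
  have "\<exists>t>0. P t ` ball p0 e \<inter> ball 0 e \<noteq> {} \<and> P t ` ball 0 e \<inter> ball q0 e \<noteq> {}"
    using hc[unfolded hypercyclicity_criterion_def, rule_format, of "ball p0 e" "ball q0 e" "ball 0 e"] e
    by simp
  then obtain t where t: "t > 0" "P t ` ball p0 e \<inter> ball 0 e \<noteq> {}" "P t ` ball 0 e \<inter> ball q0 e \<noteq> {}"
    by blast
  obtain u where u: "dist p0 u < e" "norm (P t u) < e" using t(2) by auto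
  obtain w where w: "norm w < e" "dist q0 (P t w) < e" using t(3) by auto
  have lin: "linear (P t)" using bounded_linear.linear[OF scs_bl[OF sg]] t(1) by simp
  have n1: "dist p0 (u + w) \<le> dist p0 u + norm w"
    by (metis dist_norm diff_diff_eq norm_triangle_ineq4)
  have n2: "dist q0 (P t u + P t w) \<le> dist q0 (P t w) + norm (P t u)"
    by (metis dist_norm diff_diff_eq add.commute norm_triangle_ineq4)
  have "dist p0 (u + w) < e1" using u(1) w(1) n1 unfolding e_def by linarith
  then have "u + w \<in> U" using p by auto
  moreover have "dist q0 (P t (u + w)) = dist q0 (P t u + P t w)" by (simp add: linear_add[OF lin])
  then have "dist q0 (P t (u + w)) < e2" using u(2) w(2) n2 unfolding e_def by linarith
  then have "P t (u + w) \<in> V" using q by auto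
  ultimately show ?thesis using t(1) by (intro exI[of _ t]) auto
qed

lemma step_A:
  fixes P :: "real \<Rightarrow> 'a::banach \<Rightarrow> 'a"
  assumes sg: "strongly_continuous_semigroup P" and hc: "hypercyclicity_criterion P" and d: "\<delta> > 0"
    and UVW: "open U" "U \<noteq> {}" "open V" "V \<noteq> {}" "open W" "0 \<in> W"
    and IH: "\<forall>s\<ge>0. good P U V W s \<longrightarrow> MG P \<delta> A B s"
    and G: "open G" "G \<noteq> {}"
  shows "\<exists>U V W. open U \<and> U \<noteq> {} \<and> open V \<and> V \<noteq> {} \<and> open W \<and> 0 \<in> W \<and>
     (\<forall>s\<ge>0. good P U V W s \<longrightarrow> MG P \<delta> (insert G A) B s)"
proof -
  obtain k x where k: "k \<ge> 0" "x \<in> U" "P k x \<in> G" using Tr[OF sg hc UVW(1,2) G] by blast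
  have bk: "bounded_linear (P k)" using scs_bl[OF sg k(1)] .
  define C where "C = U \<inter> P k -` G"
  define W' where "W' = W \<inter> P k -` ball 0 \<delta>"
  have o1: "open C" unfolding C_def using UVW G open_pre[OF bk] by blast
  have o2: "C \<noteq> {}" using k unfolding C_def by blast
  have o3: "open W'" unfolding W'_def using UVW open_pre[OF bk] by blast
  have o4: "0 \<in> W'" unfolding W'_def using UVW d bk by (simp add: linear_simps(3))
  have o5: "\<forall>s\<ge>0. good P C V W' s \<longrightarrow> MG P \<delta> (insert G A) B s"
  proof (intro allI impI)
    fix s :: real assume s: "s \<ge> 0" "good P C V W' s"
    then have "good P U V W s" unfolding good_def C_def W'_def by blast
    then have old: "MG P \<delta> A B s" using IH s by blast
    obtain c where c: "c \<in> C" "P s c \<in> W'" using s(2) unfolding good_def by blast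
    have "P k c \<in> G" using c unfolding C_def by blast
    moreover have "norm (P s (P k c)) < \<delta>"
      using c scs_commute[OF sg s(1) k(1)] unfolding W'_def by auto
    ultimately show "MG P \<delta> (insert G A) B s" using old unfolding MG_def by blast
  qed
  show ?thesis
    apply (rule exI[of _ C], rule exI[of _ V], rule exI[of _ W'])
    using o1 o2 o3 o4 o5 UVW by simp
qed

lemma step_B:
  fixes P :: "real \<Rightarrow> 'a::banach \<Rightarrow> 'a"
  assumes sg: "strongly_continuous_semigroup P" and hc: "hypercyclicity_criterion P" and d: "\<delta> > 0"
    and UVW: "open U" "U \<noteq> {}" "open V" "V \<noteq> {}" "open W" "0 \<in> W"
    and IH: "\<forall>s\<ge>0. good P U V W s \<longrightarrow> MG P \<delta> A B s"
    and G: "open G" "G \<noteq> {}"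
  shows "\<exists>U V W. open U \<and> U \<noteq> {} \<and> open V \<and> V \<noteq> {} \<and> open W \<and> 0 \<in> W \<and>
     (\<forall>s\<ge>0. good P U V W s \<longrightarrow> MG P \<delta> A (insert G B) s)"
proof -
  obtain k x where k: "k \<ge> 0" "x \<in> V" "P k x \<in> G" using Tr[OF sg hc UVW(3,4) G] by blast
  have bk: "bounded_linear (P k)" using scs_bl[OF sg k(1)] .
  define D where "D = V \<inter> P k -` G"
  define W' where "W' = W \<inter> P k -` ball 0 \<delta>"
  have o1: "open D" unfolding D_def using UVW G open_pre[OF bk] by blast
  have o2: "D \<noteq> {}" using k unfolding D_def by blast
  have o3: "open W'" unfolding W'_def using UVW open_pre[OF bk] by blast
  have o4: "0 \<in> W'" unfolding W'_def using UVW d bk by (simp add: linear_simps(3))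
  have o5: "\<forall>s\<ge>0. good P U D W' s \<longrightarrow> MG P \<delta> A (insert G B) s"
  proof (intro allI impI)
    fix s :: real assume s: "s \<ge> 0" "good P U D W' s"
    then have "good P U V W s" unfolding good_def D_def W'_def by blast
    then have old: "MG P \<delta> A B s" using IH s by blast
    obtain w where c: "w \<in> W'" "P s w \<in> D" using s(2) unfolding good_def by blast
    have "norm (P k w) < \<delta>" using c unfolding W'_def by auto
    moreover have "P s (P k w) \<in> G"
      using c scs_commute[OF sg s(1) k(1)] unfolding D_def by auto
    ultimately show "MG P \<delta> A (insert G B) s" using old unfolding MG_def by blast
  qed
  show ?thesis
    apply (rule exI[of _ U], rule exI[of _ D], rule exI[of _ W'])
    using o1 o2 o3 o4 o5 UVW by simp
qed

lemma K_B:
  fixes P :: "real \<Rightarrow> 'a::banach \<Rightarrow> 'a"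
  assumes sg: "strongly_continuous_semigroup P" and hc: "hypercyclicity_criterion P" and d: "\<delta> > 0"
  shows "finite B \<Longrightarrow> (\<forall>G\<in>B. open G \<and> G \<noteq> {}) \<Longrightarrow> \<exists>U V W. open U \<and> U \<noteq> {} \<and> open V \<and> V \<noteq> {} \<and> open W \<and> 0 \<in> W \<and>
     (\<forall>s\<ge>0. good P U V W s \<longrightarrow> MG P \<delta> {} B s)"
proof (induction B rule: finite_induct)
  case empty
  show ?case by (intro exI[of _ UNIV]) (auto simp: MG_def)
next
  case (insert G B)
  then obtain U V W where "open U" "U \<noteq> {}" "open V" "V \<noteq> {}" "open W" "0 \<in> W"
     "\<forall>s\<ge>0. good P U V W s \<longrightarrow> MG P \<delta> {} B s" by auto
  from step_B[OF sg hc d this] insert.prems show ?case by simp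
qed

lemma K:
  fixes P :: "real \<Rightarrow> 'a::banach \<Rightarrow> 'a"
  assumes sg: "strongly_continuous_semigroup P" and hc: "hypercyclicity_criterion P" and d: "\<delta> > 0"
    and B: "finite B" "\<forall>G\<in>B. open G \<and> G \<noteq> {}"
  shows "finite A \<Longrightarrow> (\<forall>G\<in>A. open G \<and> G \<noteq> {}) \<Longrightarrow> \<exists>U V W. open U \<and> U \<noteq> {} \<and> open V \<and> V \<noteq> {} \<and> open W \<and> 0 \<in> W \<and>
     (\<forall>s\<ge>0. good P U V W s \<longrightarrow> MG P \<delta> A B s)"
proof (induction A rule: finite_induct)
  case empty
  show ?case using K_B[OF sg hc d B] .
next
  case (insert G A)
  then obtain U V W where "open U" "U \<noteq> {}" "open V" "V \<noteq> {}" "open W" "0 \<in> W"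
     "\<forall>s\<ge>0. good P U V W s \<longrightarrow> MG P \<delta> A B s" by auto
  from step_A[OF sg hc d this] insert.prems show ?case by simp
qed

lemma rec_hc:
  fixes P :: "real \<Rightarrow> 'a::banach \<Rightarrow> 'a"
  shows "recurrent_hypercyclicity_criterion P \<Longrightarrow> hypercyclicity_criterion P"
  unfolding hypercyclicity_criterion_def
proof (intro allI impI)
  fix U V W :: "'a set" assume r: "recurrent_hypercyclicity_criterion P" and h: "open U \<and> U \<noteq> {} \<and> open V \<and> V \<noteq> {} \<and> open W \<and> 0 \<in> W"
  obtain L where L: "L \<ge> 0" "\<forall>t\<ge>0. \<exists>s\<in>{t..t+L}. P s ` U \<inter> W \<noteq> {} \<and> P s ` W \<inter> V \<noteq> {}"
    using r[unfolded recurrent_hypercyclicity_criterion_def, rule_format, OF h] by blast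
  have "\<exists>s\<in>{1..1+L}. P s ` U \<inter> W \<noteq> {} \<and> P s ` W \<inter> V \<noteq> {}" using L(2) by simp
  then obtain s where s: "1 \<le> s" "P s ` U \<inter> W \<noteq> {} \<and> P s ` W \<inter> V \<noteq> {}"
    by (meson atLeastAtMost_iff)
  have "s > 0" using s(1) by simp
  with s(2) show "\<exists>t>0. P t ` U \<inter> W \<noteq> {} \<and> P t ` W \<inter> V \<noteq> {}" by blast
qed

lemma C1:
  fixes P :: "real \<Rightarrow> 'a::banach \<Rightarrow> 'a"
  assumes sg: "strongly_continuous_semigroup P" and hc: "hypercyclicity_criterion P" and d: "\<delta> > 0"
    and "finite A" "\<forall>G\<in>A. open G \<and> G \<noteq> {}" "finite B" "\<forall>G\<in>B. open G \<and> G \<noteq> {}"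
  shows "\<exists>s>0. MG P \<delta> A B s"
proof -
  obtain U V W where UVW: "open U" "U \<noteq> {}" "open V" "V \<noteq> {}" "open W" "0 \<in> W"
     and imp: "\<forall>s\<ge>0. good P U V W s \<longrightarrow> MG P \<delta> A B s"
    using K[OF sg hc d assms(6,7) assms(4,5)] by blast
  have "\<exists>t>0. P t ` U \<inter> W \<noteq> {} \<and> P t ` W \<inter> V \<noteq> {}"
    using hc[unfolded hypercyclicity_criterion_def, rule_format, of U V W] UVW by blast
  then obtain s where s: "s > 0" "good P U V W s" unfolding good_def by blast
  have "MG P \<delta> A B s" using imp s by simp
  then show ?thesis using s(1) by blast
qed

lemma C2:
  fixes P :: "real \<Rightarrow> 'a::banach \<Rightarrow> 'a"
  assumes sg: "strongly_continuous_semigroup P" and hc: "recurrent_hypercyclicity_criterion P" and d: "\<delta> > 0"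
    and "finite A" "\<forall>G\<in>A. open G \<and> G \<noteq> {}" "finite B" "\<forall>G\<in>B. open G \<and> G \<noteq> {}"
  shows "\<exists>L\<ge>0. \<forall>t\<ge>0. \<exists>s\<in>{t..t+L}. MG P \<delta> A B s"
proof -
  obtain U V W where UVW: "open U" "U \<noteq> {}" "open V" "V \<noteq> {}" "open W" "0 \<in> W"
     and imp: "\<forall>s\<ge>0. good P U V W s \<longrightarrow> MG P \<delta> A B s"
    using K[OF sg rec_hc[OF hc] d assms(6,7) assms(4,5)] by blast
  have "\<exists>L\<ge>0. \<forall>t\<ge>0. \<exists>s\<in>{t..t+L}. P s ` U \<inter> W \<noteq> {} \<and> P s ` W \<inter> V \<noteq> {}"
    using hc[unfolded recurrent_hypercyclicity_criterion_def, rule_format, of U V W] UVW by blast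
  then obtain L where L: "L \<ge> 0" "\<forall>t\<ge>0. \<exists>s\<in>{t..t+L}. good P U V W s"
    unfolding good_def by blast
  show ?thesis
  proof (intro exI[of _ L] conjI L(1) allI impI)
    fix t :: real assume t: "t \<ge> 0"
    then obtain s where s: "s \<in> {t..t+L}" "good P U V W s" using L(2) by blast
    then have "s \<ge> 0" using t by simp
    then have "MG P \<delta> A B s" using imp s(2) by simp
    then show "\<exists>s\<in>{t..t+L}. MG P \<delta> A B s" using s(1) by blast
  qed
qed

lemma scs_lin: "strongly_continuous_semigroup P \<Longrightarrow> t \<ge> 0 \<Longrightarrow> linear (P t)"
  using scs_bl bounded_linear.linear by blast

lemma DR:
  fixes P :: "real \<Rightarrow> 'a::banach \<Rightarrow> 'a"
  assumes sg: "strongly_continuous_semigroup P" and hc: "hypercyclicity_criterion P"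
    and r: "r \<ge> 0" and G: "open G" "G \<noteq> {}"
  shows "\<exists>x. P r x \<in> G"
proof -
  obtain M where M: "M > 0" "\<forall>t\<in>{0..r}. \<forall>x. norm (P t x) \<le> M * norm x"
    using UB[OF sg r] by blast
  obtain q0 where "q0 \<in> G" using G by blast
  then obtain e2 where e2: "e2 > 0" "ball q0 e2 \<subseteq> G" using G openE by metis
  show ?thesis
  proof (cases "\<exists>p. P r p \<noteq> 0")
    case True
    then obtain p where p: "P r p \<noteq> 0" by blast
    have "continuous_on {0..r} (\<lambda>t. P t p)"
      using scs_cont[OF sg] by (rule continuous_on_subset) auto
    then have "continuous_on {0..r} (\<lambda>t. norm (P t p))" by (rule continuous_on_norm)
    then obtain t0 where t0: "t0 \<in> {0..r}" "\<forall>t\<in>{0..r}. norm (P t0 p) \<le> norm (P t p)"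
      using continuous_attains_inf[of "{0..r}" "\<lambda>t. norm (P t p)"] r by auto
    define c where "c = norm (P t0 p)"
    have "P r p = P (r - t0) (P t0 p)" using scs_comp[OF sg, of "r - t0" t0 p] t0(1) by simp
    then have "P t0 p \<noteq> 0" using p scs_lin[OF sg, of "r - t0"] t0(1) by (auto simp: linear_0)
    then have c: "c > 0" unfolding c_def by simp
    define e where "e = min e2 (c / (2 * M + 2))"
    have e: "e > 0" "e \<le> e2" "(1 + M) * e < c"
    proof -
      show "e > 0" "e \<le> e2" using e2 c M by (auto simp: e_def)
      have "(1 + M) * e \<le> (1 + M) * (c / (2 * M + 2))" using M by (intro mult_left_mono) (auto simp: e_def)
      also have "\<dots> = c / 2" using M by (simp add: field_simps)
      also have "\<dots> < c" using c by simp
      finally show "(1 + M) * e < c" .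
    qed
    have "\<exists>t>0. P t ` ball p e \<inter> ball 0 e \<noteq> {} \<and> P t ` ball 0 e \<inter> ball q0 e \<noteq> {}"
      using hc[unfolded hypercyclicity_criterion_def, rule_format, of "ball p e" "ball q0 e" "ball 0 e"] e
      by simp
    then obtain t where t: "t > 0" "P t ` ball p e \<inter> ball 0 e \<noteq> {}" "P t ` ball 0 e \<inter> ball q0 e \<noteq> {}"
      by blast
    obtain u where u: "dist p u < e" "norm (P t u) < e" using t(2) by auto
    obtain w where w: "norm w < e" "dist q0 (P t w) < e" using t(3) by auto
    have tr: "t > r"
    proof (rule ccontr)
      assume "\<not> t > r"
      then have tin: "t \<in> {0..r}" using t(1) by simp
      have "P t p = P t u + P t (p - u)" using scs_lin[OF sg, of t] t(1) by (simp add: linear_diff)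
      then have "norm (P t p) \<le> norm (P t u) + norm (P t (p - u))" by (metis norm_triangle_ineq)
      also have "norm (P t (p - u)) \<le> M * norm (p - u)" using M(2) tin by blast
      also have "M * norm (p - u) \<le> M * e" using u(1) M by (intro mult_left_mono) (auto simp: dist_norm)
      finally have "norm (P t p) < (1 + M) * e" using u(2) by (simp add: distrib_right)
      moreover have "c \<le> norm (P t p)" using t0(2) tin unfolding c_def by blast
      ultimately show False using e(3) by linarith
    qed
    have "P r (P (t - r) w) = P t w" using scs_comp[OF sg, of r "t - r" w] tr r by simp
    moreover have "P t w \<in> G" using w(2) e(2) e2(2) by auto
    ultimately show ?thesis by metis
  next
    case False
    then have z: "\<And>p. P r p = 0" by blast
    show ?thesis
    proof (cases "\<exists>v::'a. v \<noteq> 0")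
      case False
      then have "q0 = 0" by blast
      then show ?thesis using z \<open>q0 \<in> G\<close> by metis
    next
      case True
      then obtain v :: 'a where v: "v \<noteq> 0" by blast
      define n where "n = norm v"
      have n: "n > 0" using v by (simp add: n_def)
      have "\<exists>t>0. P t ` ball 0 1 \<inter> ball 0 (n / (2 * M)) \<noteq> {} \<and> P t ` ball 0 (n / (2 * M)) \<inter> ball v (n / 2) \<noteq> {}"
        using hc[unfolded hypercyclicity_criterion_def, rule_format, of "ball 0 1" "ball v (n/2)" "ball 0 (n / (2 * M))"] n M
        by simp
      then obtain t w where t: "t > 0" "norm w < n / (2 * M)" "dist v (P t w) < n / 2"
        by auto
      show ?thesis
      proof (cases "t \<le> r")
        case True
        then have "norm (P t w) \<le> M * norm w" using M(2) t(1) by auto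
        also have "\<dots> < M * (n / (2 * M))" using t(2) M by (intro mult_strict_left_mono) auto
        also have "\<dots> = n / 2" using M by simp
        finally have "norm (P t w) < n / 2" .
        moreover have "n \<le> dist v (P t w) + norm (P t w)"
          unfolding n_def dist_norm by (metis norm_triangle_ineq4 diff_add_cancel norm_triangle_ineq add_diff_cancel)
        ultimately show ?thesis using t(3) by linarith
      next
        case False
        have "P t w = P (t - r) (P r w)" using scs_comp[OF sg, of "t - r" r w] False r by simp
        then have "P t w = 0" using z scs_lin[OF sg, of "t - r"] False by (simp add: linear_0)
        then show ?thesis using t(3) n unfolding n_def by simp
      qed
    qed
  qed
qed

lemma SL:
  fixes P :: "real \<Rightarrow> 'a::banach \<Rightarrow> 'a"
  assumes sg: "strongly_continuous_semigroup P" and hc: "hypercyclicity_criterion P"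
    and L: "L \<ge> 0" and M: "M > 0" "\<forall>t\<in>{0..L}. \<forall>x. norm (P t x) \<le> M * norm x"
    and G: "open G" "G \<noteq> {}"
  shows "\<exists>F. finite F \<and> (\<forall>B\<in>F. open B \<and> B \<noteq> {}) \<and> (\<forall>r\<in>{0..L}. \<exists>B\<in>F. \<forall>a\<in>B. P r a \<in> G)"
proof -
  have loc: "\<exists>d. d > 0 \<and> (\<exists>B. open B \<and> B \<noteq> {} \<and> (\<forall>r\<in>{0..L}. dist r r0 < d \<longrightarrow> (\<forall>a\<in>B. P r a \<in> G)))"
    if r0: "r0 \<in> {0..L}" for r0
  proof -
    obtain z where z: "P r0 z \<in> G" using DR[OF sg hc _ G] r0 by auto
    then obtain \<eta> where eta: "\<eta> > 0" "ball (P r0 z) \<eta> \<subseteq> G" using G openE by metis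
    have "continuous_on {0..} (\<lambda>t. P t z)" using scs_cont[OF sg] .
    then obtain d where d: "d > 0" "\<forall>r\<in>{0..}. dist r r0 < d \<longrightarrow> dist (P r z) (P r0 z) < \<eta> / 2"
      using r0 eta(1) unfolding continuous_on_iff by (metis atLeastAtMost_iff atLeast_iff half_gt_zero)
    define B where "B = ball z (\<eta> / (2 * M))"
    have "\<forall>r\<in>{0..L}. dist r r0 < d \<longrightarrow> (\<forall>a\<in>B. P r a \<in> G)"
    proof (intro ballI impI)
      fix r a assume r: "r \<in> {0..L}" "dist r r0 < d" and a: "a \<in> B"
      have lin: "linear (P r)" using scs_lin[OF sg] r(1) by simp
      have "P r a - P r0 z = P r (a - z) + (P r z - P r0 z)" using lin by (simp add: linear_diff)
      then have "dist (P r a) (P r0 z) \<le> norm (P r (a - z)) + dist (P r z) (P r0 z)"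
        by (metis dist_norm norm_triangle_ineq)
      also have "norm (P r (a - z)) \<le> M * norm (a - z)" using M(2) r(1) by blast
      also have "M * norm (a - z) < M * (\<eta> / (2 * M))"
        using a M(1) unfolding B_def by (intro mult_strict_left_mono) (auto simp: dist_norm norm_minus_commute)
      also have "M * (\<eta> / (2 * M)) = \<eta> / 2" using M(1) by simp
      finally have "dist (P r a) (P r0 z) < \<eta> / 2 + dist (P r z) (P r0 z)" by simp
      moreover have "dist (P r z) (P r0 z) < \<eta> / 2" using d(2) r by auto
      ultimately have "dist (P r0 z) (P r a) < \<eta>" by (simp add: dist_commute)
      then show "P r a \<in> G" using eta(2) by auto
    qed
    moreover have "open B" unfolding B_def by simp
    moreover have "B \<noteq> {}"
    proof -
      have "\<eta> / (2 * M) > 0" using eta(1) M(1) by simp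
      then show ?thesis unfolding B_def by simp
    qed
    ultimately show ?thesis using d(1) by blast
  qed
  have ch: "\<forall>r0\<in>{0..L}. \<exists>dB. fst dB > 0 \<and> open (snd dB) \<and> snd dB \<noteq> {} \<and>
      (\<forall>r\<in>{0..L}. dist r r0 < fst dB \<longrightarrow> (\<forall>a\<in>snd dB. P r a \<in> G))"
  proof
    fix r0 assume r0: "r0 \<in> {0..L}"
    obtain d where dd: "d > 0 \<and> (\<exists>B. open B \<and> B \<noteq> {} \<and> (\<forall>r\<in>{0..L}. dist r r0 < d \<longrightarrow> (\<forall>a\<in>B. P r a \<in> G)))"
      using loc[OF r0] by (erule exE)
    obtain B where BB: "open B \<and> B \<noteq> {} \<and> (\<forall>r\<in>{0..L}. dist r r0 < d \<longrightarrow> (\<forall>a\<in>B. P r a \<in> G))"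
      using conjunct2[OF dd] by (erule exE)
    from dd BB have "d > 0" "open B" "B \<noteq> {}" "\<forall>r\<in>{0..L}. dist r r0 < d \<longrightarrow> (\<forall>a\<in>B. P r a \<in> G)"
      by simp_all
    then show "\<exists>dB. fst dB > 0 \<and> open (snd dB) \<and> snd dB \<noteq> {} \<and>
      (\<forall>r\<in>{0..L}. dist r r0 < fst dB \<longrightarrow> (\<forall>a\<in>snd dB. P r a \<in> G))"
      by (intro exI[of _ "(d, B)"]) simp
  qed
  obtain f where f: "\<forall>r0\<in>{0..L}. fst (f r0) > 0 \<and> open (snd (f r0)) \<and> snd (f r0) \<noteq> {} \<and>
      (\<forall>r\<in>{0..L}. dist r r0 < fst (f r0) \<longrightarrow> (\<forall>a\<in>snd (f r0). P r a \<in> G))"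
    using bchoice[OF ch] by (erule exE)
  define d where "d r0 = fst (f r0)" for r0
  define Bf where "Bf r0 = snd (f r0)" for r0
  have dB: "\<forall>r0\<in>{0..L}. d r0 > 0 \<and> open (Bf r0) \<and> Bf r0 \<noteq> {} \<and>
      (\<forall>r\<in>{0..L}. dist r r0 < d r0 \<longrightarrow> (\<forall>a\<in>Bf r0. P r a \<in> G))"
    using f unfolding d_def Bf_def .
  have cov: "{0..L} \<subseteq> (\<Union>r0\<in>{0..L}. ball r0 (d r0))"
  proof
    fix r assume "r \<in> {0..L}"
    then have "r \<in> ball r (d r)" using dB by simp
    then show "r \<in> (\<Union>r0\<in>{0..L}. ball r0 (d r0))" using \<open>r \<in> {0..L}\<close> by blast
  qed
  obtain C where C: "C \<subseteq> {0..L}" "finite C" "{0..L} \<subseteq> (\<Union>r0\<in>C. ball r0 (d r0))"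
    using compactE_image[OF compact_Icc _ cov] by blast
  show ?thesis
  proof (intro exI[of _ "Bf ` C"] conjI ballI)
    show "finite (Bf ` C)" using C(2) by simp
  next
    fix B assume "B \<in> Bf ` C"
    then obtain r0 where "r0 \<in> C" "B = Bf r0" by blast
    then show "open B" using dB C(1) by blast
  next
    fix B assume "B \<in> Bf ` C"
    then obtain r0 where "r0 \<in> C" "B = Bf r0" by blast
    then show "B \<noteq> {}" using dB C(1) by blast
  next
    fix r assume r: "r \<in> {0..L}"
    then obtain r0 where r0: "r0 \<in> C" "r \<in> ball r0 (d r0)" using C(3) by blast
    have "r0 \<in> {0..L}" using r0(1) C(1) by blast
    then have "\<forall>a\<in>Bf r0. P r a \<in> G" using dB r r0(2) by (simp add: dist_commute)
    then show "\<exists>B\<in>Bf ` C. \<forall>a\<in>B. P r a \<in> G" using r0(1) by blast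
  qed
qed

lemma L2:
  fixes P :: "real \<Rightarrow> 'a::banach \<Rightarrow> 'a"
  assumes sg: "strongly_continuous_semigroup P" and hc: "hypercyclicity_criterion P"
    and L: "L \<ge> 0" and d: "\<delta> > 0"
    and B: "finite B" "\<forall>G\<in>B. open G \<and> G \<noteq> {}"
  shows "\<exists>B' \<delta>'. \<delta>' > 0 \<and> finite B' \<and> (\<forall>G\<in>B'. open G \<and> G \<noteq> {}) \<and>
     (\<forall>t\<ge>0. MG P \<delta>' A B' t \<longrightarrow> (\<forall>r\<in>{0..L}. MG P \<delta> A B (t + r)))"
proof -
  obtain M where M: "M > 0" "\<forall>t\<in>{0..L}. \<forall>x. norm (P t x) \<le> M * norm x"
    using UB[OF sg L] by blast
  have ch: "\<forall>G\<in>B. \<exists>F. finite F \<and> (\<forall>B\<in>F. open B \<and> B \<noteq> {}) \<and> (\<forall>r\<in>{0..L}. \<exists>B\<in>F. \<forall>a\<in>B. P r a \<in> G)"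
  proof
    fix G assume "G \<in> B"
    then have "open G" "G \<noteq> {}" using B(2) by auto
    then show "\<exists>F. finite F \<and> (\<forall>B\<in>F. open B \<and> B \<noteq> {}) \<and> (\<forall>r\<in>{0..L}. \<exists>B\<in>F. \<forall>a\<in>B. P r a \<in> G)"
      by (rule SL[OF sg hc L M])
  qed
  obtain F where F: "\<forall>G\<in>B. finite (F G) \<and> (\<forall>B\<in>F G. open B \<and> B \<noteq> {}) \<and> (\<forall>r\<in>{0..L}. \<exists>B\<in>F G. \<forall>a\<in>B. P r a \<in> G)"
    using bchoice[OF ch] by (erule exE)
  define \<delta>' where "\<delta>' = \<delta> / (M + 1)"
  have d': "\<delta>' > 0" "\<delta>' \<le> \<delta>" "M * \<delta>' \<le> \<delta>"
  proof -
    show "\<delta>' > 0" using d M unfolding \<delta>'_def by simp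
    have "\<delta>' * (M + 1) = \<delta>" using M unfolding \<delta>'_def by simp
    moreover have "\<delta>' > 0" using d M unfolding \<delta>'_def by simp
    ultimately have e: "\<delta>' + M * \<delta>' = \<delta>" "M * \<delta>' > 0" using M by (simp_all add: algebra_simps)
    then show "\<delta>' \<le> \<delta>" "M * \<delta>' \<le> \<delta>" using \<open>\<delta>' > 0\<close> by linarith+
  qed
  define B' where "B' = \<Union>(F ` B)"
  have fin: "finite B'"
  proof -
    have "\<forall>G\<in>B. finite (F G)" using F by blast
    then show ?thesis using B(1) unfolding B'_def by simp
  qed
  have opn: "\<forall>G\<in>B'. open G \<and> G \<noteq> {}"
  proof
    fix G assume "G \<in> B'"
    then obtain G0 where "G0 \<in> B" "G \<in> F G0" unfolding B'_def by blast
    then show "open G \<and> G \<noteq> {}" using F by blast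
  qed
  have main: "\<forall>t\<ge>0. MG P \<delta>' A B' t \<longrightarrow> (\<forall>r\<in>{0..L}. MG P \<delta> A B (t + r))"
  proof (intro allI impI ballI)
    fix t r assume t: "t \<ge> 0" and mg: "MG P \<delta>' A B' t" and r: "r \<in> {0..L}"
    have comp: "P (t + r) x = P r (P t x)" for x using scs_comp[OF sg, of r t x] t r by (simp add: add.commute)
    show "MG P \<delta> A B (t + r)"
      unfolding MG_def
    proof (intro conjI ballI)
      fix G assume G: "G \<in> A"
      then obtain x where x: "x \<in> G" "norm (P t x) < \<delta>'" using mg unfolding MG_def by blast
      have "norm (P r (P t x)) \<le> M * norm (P t x)" using M(2) r by blast
      also have "\<dots> < M * \<delta>'" using x(2) M(1) by simp
      also have "\<dots> \<le> \<delta>" using d'(3) .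
      finally show "\<exists>x\<in>G. norm (P (t + r) x) < \<delta>" using x(1) comp by auto
    next
      fix G assume G: "G \<in> B"
      then obtain B0 where B0: "B0 \<in> F G" "\<forall>a\<in>B0. P r a \<in> G" using F r by blast
      then have "B0 \<in> B'" using G unfolding B'_def by blast
      then obtain w where w: "norm w < \<delta>'" "P t w \<in> B0" using mg unfolding MG_def by blast
      have "P (t + r) w \<in> G" using w(2) B0(2) comp by simp
      then show "\<exists>w. norm w < \<delta> \<and> P (t + r) w \<in> G"
        using w(1) d'(2) by (intro exI[of _ w]) simp
    qed
  qed
  show ?thesis
    by (rule exI[of _ B'], rule exI[of _ \<delta>']) (intro conjI d'(1) fin opn main)
qed

lemma span_rep:
  fixes tp :: "'x::real_vector \<Rightarrow> 'y::real_vector \<Rightarrow> 'z::real_vector"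
  assumes lin1: "\<forall>y. linear (\<lambda>x. tp x y)"
    and z: "z \<in> span (range (case_prod tp))"
  shows "\<exists>I x y. finite (I :: 'z set) \<and> z = (\<Sum>i\<in>I. tp (x i) (y i))"
proof -
  obtain t r where t: "finite t" "t \<subseteq> range (case_prod tp)" "z = (\<Sum>a\<in>t. r a *\<^sub>R a)"
    using z unfolding span_explicit by blast
  have ch: "\<forall>a\<in>t. \<exists>p. a = tp (fst p) (snd p)"
  proof
    fix a assume "a \<in> t"
    then obtain p where "a = case_prod tp p" using t(2) by blast
    then show "\<exists>p. a = tp (fst p) (snd p)" by (intro exI[of _ p]) (simp add: case_prod_beta)
  qed
  obtain g where g: "\<forall>a\<in>t. a = tp (fst (g a)) (snd (g a))" using bchoice[OF ch] by (erule exE)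
  have "\<forall>a\<in>t. r a *\<^sub>R a = tp (r a *\<^sub>R fst (g a)) (snd (g a))"
  proof
    fix a assume "a \<in> t"
    then have ga: "a = tp (fst (g a)) (snd (g a))" using g by blast
    have "r a *\<^sub>R a = r a *\<^sub>R tp (fst (g a)) (snd (g a))" using ga by (rule arg_cong)
    also have "\<dots> = tp (r a *\<^sub>R fst (g a)) (snd (g a))"
    proof -
      have "linear (\<lambda>x. tp x (snd (g a)))" using lin1 by blast
      from linear_scale[OF this, of "r a" "fst (g a)"] show ?thesis by simp
    qed
    finally show "r a *\<^sub>R a = tp (r a *\<^sub>R fst (g a)) (snd (g a))" .
  qed
  then have "z = (\<Sum>a\<in>t. tp (r a *\<^sub>R fst (g a)) (snd (g a)))" using t(3) by simp
  then show ?thesis using t(1)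
    by (intro exI[of _ t] exI[of _ "\<lambda>a. r a *\<^sub>R fst (g a)"] exI[of _ "\<lambda>a. snd (g a)"]) simp
qed

lemma tp_diff_bound:
  fixes tp :: "'x::real_normed_vector \<Rightarrow> 'y::real_normed_vector \<Rightarrow> 'z::real_normed_vector"
  assumes lin1: "\<forall>y. linear (\<lambda>x. tp x y)" and lin2: "\<forall>x. linear (tp x)"
    and cn: "\<forall>x y. norm (tp x y) = norm x * norm y"
  shows "norm (tp a b - tp c d) \<le> norm (a - c) * norm b + norm c * norm (b - d)"
proof -
  have l1: "linear (\<lambda>x. tp x b)" using lin1 by blast
  have e1: "tp (a - c) b = tp a b - tp c b" using linear_diff[OF l1, of a c] by simp
  have l2: "linear (tp c)" using lin2 by blast
  have e2: "tp c (b - d) = tp c b - tp c d" using linear_diff[OF l2, of b d] by simp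
  have "tp a b - tp c d = tp (a - c) b + tp c (b - d)" using e1 e2 by simp
  then have "norm (tp a b - tp c d) \<le> norm (tp (a - c) b) + norm (tp c (b - d))"
    by (metis norm_triangle_ineq)
  then show ?thesis using cn by simp
qed

lemma term_bound:
  fixes tp :: "'x::real_normed_vector \<Rightarrow> 'y::real_normed_vector \<Rightarrow> 'z::real_normed_vector"
  assumes lin1: "\<forall>y. linear (\<lambda>x. tp x y)" and lin2: "\<forall>x. linear (tp x)"
    and cn: "\<forall>x y. norm (tp x y) = norm x * norm y"
    and a: "dist c a < \<delta>" and b: "dist d b < \<delta>" and d1: "\<delta> \<le> 1"
    and Kc: "norm c \<le> K" and Kd: "norm d \<le> K"
  shows "norm (tp a b - tp c d) \<le> \<delta> * (2 * K + 1)"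
proof -
  have nb: "norm b \<le> K + 1"
    using b d1 Kd norm_triangle_ineq2[of b d] by (simp add: dist_norm norm_minus_commute)
  have "norm (tp a b - tp c d) \<le> norm (a - c) * norm b + norm c * norm (b - d)"
    by (rule tp_diff_bound[OF lin1 lin2 cn])
  also have "norm (a - c) * norm b \<le> \<delta> * (K + 1)"
  proof (rule mult_mono)
    show "norm (a - c) \<le> \<delta>" using a by (simp add: dist_norm norm_minus_commute)
    show "0 \<le> \<delta>" using a zero_le_dist[of c a] by linarith
  qed (use nb in auto)
  also have "norm c * norm (b - d) \<le> K * \<delta>"
  proof (rule mult_mono)
    show "norm (b - d) \<le> \<delta>" using b by (simp add: dist_norm norm_minus_commute)
    show "0 \<le> K" using Kc norm_ge_zero[of c] by linarith
  qed (use Kc in auto)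
  finally show ?thesis by (simp add: algebra_simps)
qed

lemma sum_small:
  fixes f :: "'i \<Rightarrow> 'z::real_normed_vector"
  assumes "finite I" "\<forall>i\<in>I. norm (f i) \<le> c" "c \<ge> 0" "c * real N \<le> \<epsilon>" "card I < N" "\<epsilon> > 0"
  shows "norm (\<Sum>i\<in>I. f i) < \<epsilon>"
proof -
  have "norm (\<Sum>i\<in>I. f i) \<le> (\<Sum>i\<in>I. norm (f i))" by (rule norm_sum)
  also have "\<dots> \<le> real (card I) * c" using assms(2) sum_bounded_above[of I "\<lambda>i. norm (f i)" c] by simp
  finally have 1: "norm (\<Sum>i\<in>I. f i) \<le> real (card I) * c" .
  show ?thesis
  proof (cases "c = 0")
    case True then show ?thesis using 1 assms(6) by simp
  next
    case False
    then have "real (card I) * c < real N * c" using assms(3,5) by (intro mult_strict_right_mono) auto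
    then show ?thesis using 1 assms(4) by (simp add: mult.commute)
  qed
qed

lemma le_K:
  fixes f g :: "'i \<Rightarrow> real"
  assumes "finite I" "i \<in> I" "\<forall>j\<in>I. f j \<ge> 0" "\<forall>j\<in>I. g j \<ge> 0" "Q \<ge> 0"
  shows "f i \<le> (\<Sum>j\<in>I. f j + g j) + Q"
proof -
  have "f i \<le> f i + g i" using assms(2,4) by simp
  also have "\<dots> \<le> (\<Sum>j\<in>I. f j + g j)"
    using assms by (intro member_le_sum) auto
  finally show ?thesis using assms(5) by simp
qed

lemma reduce:
  fixes T :: "real \<Rightarrow> 'x::banach \<Rightarrow> 'x"
    and S :: "real \<Rightarrow> 'y::banach \<Rightarrow> 'y"
    and tp :: "'x \<Rightarrow> 'y \<Rightarrow> 'z::banach"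
    and R :: "real \<Rightarrow> 'z \<Rightarrow> 'z"
  assumes tc: "tensor_completion tp"
    and hR1: "\<forall>t\<ge>0. bounded_linear (R t)"
    and hR2: "\<forall>t\<ge>0. \<forall>x y. R t (tp x y) = tp (T t x) (S t y)"
    and U: "open U" "U \<noteq> {}" and V: "open V" "V \<noteq> {}" and W: "open W" "0 \<in> W"
  shows "\<exists>\<delta> AT BT AS BS. \<delta> > 0 \<and> finite AT \<and> (\<forall>G\<in>AT. open G \<and> G \<noteq> {}) \<and>
     finite BT \<and> (\<forall>G\<in>BT. open G \<and> G \<noteq> {}) \<and> finite AS \<and> (\<forall>G\<in>AS. open G \<and> G \<noteq> {}) \<and>
     finite BS \<and> (\<forall>G\<in>BS. open G \<and> G \<noteq> {}) \<and>
     (\<forall>s\<ge>0. MG T \<delta> AT BT s \<and> MG S \<delta> AS BS s \<longrightarrow> R s ` U \<inter> W \<noteq> {} \<and> R s ` W \<inter> V \<noteq> {})"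
proof -
  note tcd = tc[unfolded tensor_completion_def]
  have lin2: "\<forall>x. linear (tp x)" using conjunct1[OF tcd] .
  have lin1: "\<forall>y. linear (\<lambda>x. tp x y)" using conjunct1[OF conjunct2[OF tcd]] .
  have dense: "closure (span (range (case_prod tp))) = UNIV"
    using conjunct1[OF conjunct2[OF conjunct2[OF conjunct2[OF tcd]]]] .
  have cn: "\<forall>x y. norm (tp x y) = norm x * norm y"
    using conjunct1[OF conjunct2[OF conjunct2[OF conjunct2[OF conjunct2[OF tcd]]]]] .
  have "U \<inter> span (range (case_prod tp)) \<noteq> {}"
    using open_Int_closure_eq_empty[OF U(1), of "span (range (case_prod tp))"] dense U(2) by simp
  then obtain u where u: "u \<in> U" "u \<in> span (range (case_prod tp))" by blast
  have "V \<inter> span (range (case_prod tp)) \<noteq> {}"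
    using open_Int_closure_eq_empty[OF V(1), of "span (range (case_prod tp))"] dense V(2) by simp
  then obtain v where v: "v \<in> V" "v \<in> span (range (case_prod tp))" by blast
  obtain I :: "'z set" and x y where I: "finite I" "u = (\<Sum>i\<in>I. tp (x i) (y i))"
    using span_rep[OF lin1 u(2)] by (elim exE conjE) (rule that)
  obtain J :: "'z set" and a b where J: "finite J" "v = (\<Sum>j\<in>J. tp (a j) (b j))"
    using span_rep[OF lin1 v(2)] by (elim exE conjE) (rule that)
  obtain e1 where e1: "e1 > 0" "ball u e1 \<subseteq> U" using U(1) u(1) openE by metis
  obtain e2 where e2: "e2 > 0" "ball v e2 \<subseteq> V" using V(1) v(1) openE by metis
  obtain e3 where e3: "e3 > 0" "ball 0 e3 \<subseteq> W" using W openE by metis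
  define \<epsilon> where "\<epsilon> = min e1 (min e2 e3)"
  have eps: "\<epsilon> > 0" "\<epsilon> \<le> e1" "\<epsilon> \<le> e2" "\<epsilon> \<le> e3" using e1 e2 e3 by (auto simp: \<epsilon>_def)
  define K where "K = (\<Sum>i\<in>I. norm (x i) + norm (y i)) + (\<Sum>j\<in>J. norm (a j) + norm (b j))"
  have K0: "(\<Sum>i\<in>I. norm (x i) + norm (y i)) \<ge> 0" "(\<Sum>j\<in>J. norm (a j) + norm (b j)) \<ge> 0"
    by (simp_all add: sum_nonneg)
  have Kx: "norm (x i) \<le> K" "norm (y i) \<le> K" if "i \<in> I" for i
  proof -
    show "norm (x i) \<le> K" unfolding K_def using le_K[OF I(1) that _ _ K0(2), of "\<lambda>i. norm (x i)" "\<lambda>i. norm (y i)"] by simp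
    have "norm (y i) \<le> (\<Sum>i\<in>I. norm (y i) + norm (x i)) + (\<Sum>j\<in>J. norm (a j) + norm (b j))"
      using le_K[OF I(1) that _ _ K0(2), of "\<lambda>i. norm (y i)" "\<lambda>i. norm (x i)"] by simp
    then show "norm (y i) \<le> K" unfolding K_def by (simp add: add.commute)
  qed
  have Ka: "norm (a j) \<le> K" "norm (b j) \<le> K" if "j \<in> J" for j
  proof -
    have "norm (a j) \<le> (\<Sum>j\<in>J. norm (a j) + norm (b j)) + (\<Sum>i\<in>I. norm (x i) + norm (y i))"
      using le_K[OF J(1) that _ _ K0(1), of "\<lambda>j. norm (a j)" "\<lambda>j. norm (b j)"] by simp
    then show "norm (a j) \<le> K" unfolding K_def by simp
    have "norm (b j) \<le> (\<Sum>j\<in>J. norm (b j) + norm (a j)) + (\<Sum>i\<in>I. norm (x i) + norm (y i))"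
      using le_K[OF J(1) that _ _ K0(1), of "\<lambda>j. norm (b j)" "\<lambda>j. norm (a j)"] by simp
    then show "norm (b j) \<le> K" unfolding K_def by (simp add: add.commute)
  qed
  have Kpos: "K \<ge> 0" unfolding K_def using K0 by simp
  define N where "N = card I + card J + 1"
  have N: "card I < N" "card J < N" "real N > 0" by (auto simp: N_def)
  define \<delta> where "\<delta> = min 1 (\<epsilon> / ((2 * K + 1) * real N))"
  have dpos: "\<delta> > 0" using eps Kpos N by (simp add: \<delta>_def)
  have d1: "\<delta> \<le> 1" by (simp add: \<delta>_def)
  define c where "c = \<delta> * (2 * K + 1)"
  have c0: "c \<ge> 0" using dpos Kpos by (simp add: c_def)
  have cN: "c * real N \<le> \<epsilon>"
  proof -
    have "\<delta> \<le> \<epsilon> / ((2 * K + 1) * real N)" by (simp add: \<delta>_def)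
    then have "\<delta> * ((2 * K + 1) * real N) \<le> \<epsilon>" using Kpos N by (simp add: pos_le_divide_eq)
    then show ?thesis by (simp add: c_def mult.assoc)
  qed
  have dd: "\<delta> * \<delta> \<le> c"
  proof -
    have "\<delta> * \<delta> \<le> \<delta> * 1" using d1 dpos by (intro mult_left_mono) auto
    also have "\<dots> \<le> \<delta> * (2 * K + 1)" using dpos Kpos by (intro mult_left_mono) auto
    finally show ?thesis by (simp add: c_def)
  qed
  define AT where "AT = (\<lambda>i. ball (x i) \<delta>) ` I"
  define AS where "AS = (\<lambda>i. ball (y i) \<delta>) ` I"
  define BT where "BT = (\<lambda>j. ball (a j) \<delta>) ` J"
  define BS where "BS = (\<lambda>j. ball (b j) \<delta>) ` J"
  have fams: "finite AT" "\<forall>G\<in>AT. open G \<and> G \<noteq> {}" "finite BT" "\<forall>G\<in>BT. open G \<and> G \<noteq> {}"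
     "finite AS" "\<forall>G\<in>AS. open G \<and> G \<noteq> {}" "finite BS" "\<forall>G\<in>BS. open G \<and> G \<noteq> {}"
    using I(1) J(1) dpos by (auto simp: AT_def AS_def BT_def BS_def)
  have main: "\<forall>s\<ge>0. MG T \<delta> AT BT s \<and> MG S \<delta> AS BS s \<longrightarrow> R s ` U \<inter> W \<noteq> {} \<and> R s ` W \<inter> V \<noteq> {}"
  proof (intro allI impI)
    fix s :: real assume s: "s \<ge> 0" and mg: "MG T \<delta> AT BT s \<and> MG S \<delta> AS BS s"
    have linR: "linear (R s)" using hR1 s bounded_linear.linear by blast
    have chX: "\<forall>i\<in>I. \<exists>x'. x' \<in> ball (x i) \<delta> \<and> norm (T s x') < \<delta>"
      using mg unfolding MG_def AT_def by blast
    obtain X' where X': "\<forall>i\<in>I. X' i \<in> ball (x i) \<delta> \<and> norm (T s (X' i)) < \<delta>"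
      using bchoice[OF chX] by (erule exE)
    have chY: "\<forall>i\<in>I. \<exists>y'. y' \<in> ball (y i) \<delta> \<and> norm (S s y') < \<delta>"
      using mg unfolding MG_def AS_def by blast
    obtain Y' where Y': "\<forall>i\<in>I. Y' i \<in> ball (y i) \<delta> \<and> norm (S s (Y' i)) < \<delta>"
      using bchoice[OF chY] by (erule exE)
    have chA: "\<forall>j\<in>J. \<exists>w. norm w < \<delta> \<and> T s w \<in> ball (a j) \<delta>"
      using mg unfolding MG_def BT_def by blast
    obtain A' where A': "\<forall>j\<in>J. norm (A' j) < \<delta> \<and> T s (A' j) \<in> ball (a j) \<delta>"
      using bchoice[OF chA] by (erule exE)
    have chB: "\<forall>j\<in>J. \<exists>w. norm w < \<delta> \<and> S s w \<in> ball (b j) \<delta>"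
      using mg unfolding MG_def BS_def by blast
    obtain B' where B': "\<forall>j\<in>J. norm (B' j) < \<delta> \<and> S s (B' j) \<in> ball (b j) \<delta>"
      using bchoice[OF chB] by (erule exE)
    define u' where "u' = (\<Sum>i\<in>I. tp (X' i) (Y' i))"
    define w' where "w' = (\<Sum>j\<in>J. tp (A' j) (B' j))"
    have Ru: "R s u' = (\<Sum>i\<in>I. tp (T s (X' i)) (S s (Y' i)))"
      unfolding u'_def linear_sum[OF linR] using hR2 s by simp
    have Rw: "R s w' = (\<Sum>j\<in>J. tp (T s (A' j)) (S s (B' j)))"
      unfolding w'_def linear_sum[OF linR] using hR2 s by simp
    have "norm (\<Sum>i\<in>I. tp (X' i) (Y' i) - tp (x i) (y i)) < \<epsilon>"
    proof (rule sum_small[OF I(1) _ c0 cN N(1) eps(1)], rule ballI)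
      fix i assume i: "i \<in> I"
      show "norm (tp (X' i) (Y' i) - tp (x i) (y i)) \<le> c"
        unfolding c_def
        by (rule term_bound[OF lin1 lin2 cn _ _ d1 Kx(1)[OF i] Kx(2)[OF i]]) (use X' Y' i in auto)
    qed
    then have "dist u u' < \<epsilon>"
      unfolding I(2) u'_def dist_norm by (simp add: sum_subtractf norm_minus_commute)
    then have uU: "u' \<in> U" using eps(2) e1(2) by auto
    have "norm (\<Sum>i\<in>I. tp (T s (X' i)) (S s (Y' i))) < \<epsilon>"
    proof (rule sum_small[OF I(1) _ c0 cN N(1) eps(1)], rule ballI)
      fix i assume i: "i \<in> I"
      have "norm (tp (T s (X' i)) (S s (Y' i))) = norm (T s (X' i)) * norm (S s (Y' i))" using cn by simp
      also have "\<dots> \<le> \<delta> * \<delta>" using X' Y' i dpos by (intro mult_mono) auto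
      finally show "norm (tp (T s (X' i)) (S s (Y' i))) \<le> c" using dd by simp
    qed
    then have "R s u' \<in> W" using Ru eps(4) e3(2) by auto
    then have first: "R s ` U \<inter> W \<noteq> {}" using uU by blast
    have "norm (\<Sum>j\<in>J. tp (A' j) (B' j)) < \<epsilon>"
    proof (rule sum_small[OF J(1) _ c0 cN N(2) eps(1)], rule ballI)
      fix j assume j: "j \<in> J"
      have "norm (tp (A' j) (B' j)) = norm (A' j) * norm (B' j)" using cn by simp
      also have "\<dots> \<le> \<delta> * \<delta>" using A' B' j dpos by (intro mult_mono) auto
      finally show "norm (tp (A' j) (B' j)) \<le> c" using dd by simp
    qed
    then have wW: "w' \<in> W" unfolding w'_def using eps(4) e3(2) by auto
    have "norm (\<Sum>j\<in>J. tp (T s (A' j)) (S s (B' j)) - tp (a j) (b j)) < \<epsilon>"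
    proof (rule sum_small[OF J(1) _ c0 cN N(2) eps(1)], rule ballI)
      fix j assume j: "j \<in> J"
      show "norm (tp (T s (A' j)) (S s (B' j)) - tp (a j) (b j)) \<le> c"
        unfolding c_def
        by (rule term_bound[OF lin1 lin2 cn _ _ d1 Ka(1)[OF j] Ka(2)[OF j]]) (use A' B' j in auto)
    qed
    then have "dist v (R s w') < \<epsilon>"
      unfolding J(2) Rw dist_norm by (simp add: sum_subtractf norm_minus_commute)
    then have "R s w' \<in> V" using eps(3) e2(2) by auto
    then have second: "R s ` W \<inter> V \<noteq> {}" using wW by blast
    show "R s ` U \<inter> W \<noteq> {} \<and> R s ` W \<inter> V \<noteq> {}" using first second by simp
  qed
  show ?thesis
    apply (rule exI[of _ \<delta>], rule exI[of _ AT], rule exI[of _ BT], rule exI[of _ AS], rule exI[of _ BS])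
    using dpos fams main by simp
qed

lemma partA:
  fixes T :: "real \<Rightarrow> 'x::banach \<Rightarrow> 'x"
    and S :: "real \<Rightarrow> 'y::banach \<Rightarrow> 'y"
    and tp :: "'x \<Rightarrow> 'y \<Rightarrow> 'z::banach"
    and R :: "real \<Rightarrow> 'z \<Rightarrow> 'z"
  assumes sgT: "strongly_continuous_semigroup T"
    and sgS: "strongly_continuous_semigroup S"
    and rT: "recurrent_hypercyclicity_criterion T"
    and tc: "tensor_completion tp"
    and hR1: "\<forall>t\<ge>0. bounded_linear (R t)"
    and hR2: "\<forall>t\<ge>0. \<forall>x y. R t (tp x y) = tp (T t x) (S t y)"
    and hS: "hypercyclicity_criterion S"
  shows "hypercyclicity_criterion R"
  unfolding hypercyclicity_criterion_def
proof (intro allI impI)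
  fix U V W :: "'z set"
  assume h: "open U \<and> U \<noteq> {} \<and> open V \<and> V \<noteq> {} \<and> open W \<and> 0 \<in> W"
  then have h': "open U" "U \<noteq> {}" "open V" "V \<noteq> {}" "open W" "0 \<in> W" by simp_all
  obtain \<delta> AT BT AS BS where d: "\<delta> > 0" and AT: "finite AT" "\<forall>G\<in>AT. open G \<and> G \<noteq> {}"
    and BT: "finite BT" "\<forall>G\<in>BT. open G \<and> G \<noteq> {}" and AS: "finite AS" "\<forall>G\<in>AS. open G \<and> G \<noteq> {}"
    and BS: "finite BS" "\<forall>G\<in>BS. open G \<and> G \<noteq> {}"
    and imp: "\<forall>s\<ge>0. MG T \<delta> AT BT s \<and> MG S \<delta> AS BS s \<longrightarrow> R s ` U \<inter> W \<noteq> {} \<and> R s ` W \<inter> V \<noteq> {}"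
    using reduce[OF tc hR1 hR2 h'] by (elim exE conjE)
  obtain LT where LT: "LT \<ge> 0" "\<forall>t\<ge>0. \<exists>s\<in>{t..t+LT}. MG T \<delta> AT BT s"
    using C2[OF sgT rT d AT BT] by (elim exE conjE)
  obtain BS' \<delta>' where d': "\<delta>' > 0" and BS': "finite BS'" "\<forall>G\<in>BS'. open G \<and> G \<noteq> {}"
    and sh: "\<forall>t\<ge>0. MG S \<delta>' AS BS' t \<longrightarrow> (\<forall>r\<in>{0..LT}. MG S \<delta> AS BS (t + r))"
    using L2[OF sgS hS LT(1) d BS, of AS] by (elim exE conjE)
  obtain s0 where s0: "s0 > 0" "MG S \<delta>' AS BS' s0"
    using C1[OF sgS hS d' AS BS'] by (elim exE conjE)
  have "\<exists>s\<in>{s0..s0+LT}. MG T \<delta> AT BT s" using LT(2) s0(1) by simp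
  then obtain s where s: "s \<in> {s0..s0+LT}" "MG T \<delta> AT BT s" by blast
  have rr: "s - s0 \<in> {0..LT}" using s(1) by simp
  have "\<forall>r\<in>{0..LT}. MG S \<delta> AS BS (s0 + r)" using sh s0 by simp
  then have "MG S \<delta> AS BS (s0 + (s - s0))" using rr by blast
  then have "MG S \<delta> AS BS s" by simp
  moreover have "s > 0" using s(1) s0(1) by simp
  ultimately have "R s ` U \<inter> W \<noteq> {} \<and> R s ` W \<inter> V \<noteq> {}" using imp s(2) by simp
  then show "\<exists>t>0. R t ` U \<inter> W \<noteq> {} \<and> R t ` W \<inter> V \<noteq> {}" using \<open>s > 0\<close> by blast
qed

lemma partB:
  fixes T :: "real \<Rightarrow> 'x::banach \<Rightarrow> 'x"
    and S :: "real \<Rightarrow> 'y::banach \<Rightarrow> 'y"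
    and tp :: "'x \<Rightarrow> 'y \<Rightarrow> 'z::banach"
    and R :: "real \<Rightarrow> 'z \<Rightarrow> 'z"
  assumes sgT: "strongly_continuous_semigroup T"
    and sgS: "strongly_continuous_semigroup S"
    and rT: "recurrent_hypercyclicity_criterion T"
    and tc: "tensor_completion tp"
    and hR1: "\<forall>t\<ge>0. bounded_linear (R t)"
    and hR2: "\<forall>t\<ge>0. \<forall>x y. R t (tp x y) = tp (T t x) (S t y)"
    and rS: "recurrent_hypercyclicity_criterion S"
  shows "recurrent_hypercyclicity_criterion R"
  unfolding recurrent_hypercyclicity_criterion_def
proof (intro allI impI)
  fix U V W :: "'z set"
  assume h: "open U \<and> U \<noteq> {} \<and> open V \<and> V \<noteq> {} \<and> open W \<and> 0 \<in> W"
  then have h': "open U" "U \<noteq> {}" "open V" "V \<noteq> {}" "open W" "0 \<in> W" by simp_all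
  obtain \<delta> AT BT AS BS where d: "\<delta> > 0" and AT: "finite AT" "\<forall>G\<in>AT. open G \<and> G \<noteq> {}"
    and BT: "finite BT" "\<forall>G\<in>BT. open G \<and> G \<noteq> {}" and AS: "finite AS" "\<forall>G\<in>AS. open G \<and> G \<noteq> {}"
    and BS: "finite BS" "\<forall>G\<in>BS. open G \<and> G \<noteq> {}"
    and imp: "\<forall>s\<ge>0. MG T \<delta> AT BT s \<and> MG S \<delta> AS BS s \<longrightarrow> R s ` U \<inter> W \<noteq> {} \<and> R s ` W \<inter> V \<noteq> {}"
    using reduce[OF tc hR1 hR2 h'] by (elim exE conjE)
  obtain LT where LT: "LT \<ge> 0" "\<forall>t\<ge>0. \<exists>s\<in>{t..t+LT}. MG T \<delta> AT BT s"
    using C2[OF sgT rT d AT BT] by (elim exE conjE)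
  obtain BS' \<delta>' where d': "\<delta>' > 0" and BS': "finite BS'" "\<forall>G\<in>BS'. open G \<and> G \<noteq> {}"
    and sh: "\<forall>t\<ge>0. MG S \<delta>' AS BS' t \<longrightarrow> (\<forall>r\<in>{0..LT}. MG S \<delta> AS BS (t + r))"
    using L2[OF sgS rec_hc[OF rS] LT(1) d BS, of AS] by (elim exE conjE)
  obtain LS where LS: "LS \<ge> 0" "\<forall>t\<ge>0. \<exists>s\<in>{t..t+LS}. MG S \<delta>' AS BS' s"
    using C2[OF sgS rS d' AS BS'] by (elim exE conjE)
  show "\<exists>L\<ge>0. \<forall>t\<ge>0. \<exists>s\<in>{t..t+L}. R s ` U \<inter> W \<noteq> {} \<and> R s ` W \<inter> V \<noteq> {}"
  proof (intro exI[of _ "LS + LT"] conjI allI impI)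
    show "LS + LT \<ge> 0" using LS(1) LT(1) by simp
  next
    fix t :: real assume t: "t \<ge> 0"
    have "\<exists>s0\<in>{t..t+LS}. MG S \<delta>' AS BS' s0" using LS(2) t by simp
    then obtain s0 where s0: "s0 \<in> {t..t+LS}" "MG S \<delta>' AS BS' s0" by blast
    have s00: "s0 \<ge> 0" using s0(1) t by simp
    have "\<exists>s\<in>{s0..s0+LT}. MG T \<delta> AT BT s" using LT(2) s00 by simp
    then obtain s where s: "s \<in> {s0..s0+LT}" "MG T \<delta> AT BT s" by blast
    have rr: "s - s0 \<in> {0..LT}" using s(1) by simp
    have "\<forall>r\<in>{0..LT}. MG S \<delta> AS BS (s0 + r)" using sh s0(2) s00 by simp
    then have "MG S \<delta> AS BS (s0 + (s - s0))" using rr by blast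
    then have "MG S \<delta> AS BS s" by simp
    moreover have "s \<ge> 0" using s(1) s00 by simp
    ultimately have "R s ` U \<inter> W \<noteq> {} \<and> R s ` W \<inter> V \<noteq> {}" using imp s(2) by simp
    moreover have "s \<in> {t..t + (LS + LT)}" using s(1) s0(1) by simp
    ultimately show "\<exists>s\<in>{t..t + (LS + LT)}. R s ` U \<inter> W \<noteq> {} \<and> R s ` W \<inter> V \<noteq> {}" by blast
  qed
qed

theorem theorem2p1:
  fixes T :: "real \<Rightarrow> 'x::banach \<Rightarrow> 'x"
    and S :: "real \<Rightarrow> 'y::banach \<Rightarrow> 'y"
    and tp :: "'x \<Rightarrow> 'y \<Rightarrow> 'z::banach"
    and R :: "real \<Rightarrow> 'z \<Rightarrow> 'z"
  assumes "strongly_continuous_semigroup T"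
    and "strongly_continuous_semigroup S"
    and "recurrent_hypercyclicity_criterion T"
    and "tensor_completion tp"
    and "\<forall>t\<ge>0. bounded_linear (R t)"
    and "\<forall>t\<ge>0. \<forall>x y. R t (tp x y) = tp (T t x) (S t y)"
  shows "(hypercyclicity_criterion S \<longrightarrow> hypercyclicity_criterion R) \<and>
         (recurrent_hypercyclicity_criterion S \<longrightarrow> recurrent_hypercyclicity_criterion R)"
  using partA[OF assms] partB[OF assms] by blast

end
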